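(* Let $k\ge2$, $\beta>0$, $J,B\in\mathbb{R}$, $\theta=\tanh(\beta J)$, $f_\theta(h)=\operatorname{arctanh}(\theta\tanh h)$, and let $h\in\mathbb{R}$ be a solution of $h=k f_\theta(h+\beta B)$. For the translation-invariant boundary condition $h_x=h$ for all $x\in V$, the free energy $F(h)=-\lim_{n\to\infty}\frac{1}{\beta|V_n|}\ln Z_n(h)$ exists and $$F(h)=-\frac{1}{2\beta}\ln\big[4\cosh(h+\beta(B+J))\cosh(h+\beta(B-J))\big].$$
   Context: $\Gamma^k=(V,L)$ is the Cayley tree in which every vertex has $k+1$ neighbours; $x^0\in V$ is a fixed root, $d$ the graph distance, $V_n=\{x:d(x,x^0)\le n\}$, $W_n=\{x:d(x,x^0)=n\}$. For a boundary condition $h=\{h_x\in\mathbb{R}\}_{x\in V}$, $$Z_n(h)=\sum_{\sigma\in\{-1,1\}^{V_n}}\exp\Big\{\beta J\sum_{\langle x,y\rangle\subset V_n}\sigma(x)\sigma(y)+\beta B\sum_{x\in V_n}\sigma(x)+\sum_{x\in W_n}h_x\sigma(x)\Big\},$$ the first sum running over nearest-neighbour pairs with both endpoints in $V_n$. *)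

theory Defs
  imports Complex_Main "HOL-Library.FuncSet"
begin

text \<open>Cayley tree of order k: vertices are finite words; the root is the empty word,
  the root has k+1 children [i] (i < k+1), every other vertex xs has k children xs @ [i] (i < k).
  Then every vertex has exactly k+1 neighbours and the graph distance to the root is the length.\<close>

definition cayley_vertex :: "nat \<Rightarrow> nat list \<Rightarrow> bool" where
  "cayley_vertex k xs = (case xs of [] \<Rightarrow> True | i # ys \<Rightarrow> i < k + 1 \<and> (\<forall>j\<in>set ys. j < k))"

definition ball_V :: "nat \<Rightarrow> nat \<Rightarrow> nat list set" where
  "ball_V k n = {xs. cayley_vertex k xs \<and> length xs \<le> n}"

definition sphere_W :: "nat \<Rightarrow> nat \<Rightarrow> nat list set" where
  "sphere_W k n = {xs. cayley_vertex k xs \<and> length xs = n}"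

text \<open>Nearest-neighbour pairs with both endpoints in V_n, each unordered pair counted once
  as (parent, child).\<close>
definition edges_V :: "nat \<Rightarrow> nat \<Rightarrow> (nat list \<times> nat list) set" where
  "edges_V k n = {(x, x @ [i]) | x i. x @ [i] \<in> ball_V k n}"

definition partition_fn ::
  "nat \<Rightarrow> real \<Rightarrow> real \<Rightarrow> real \<Rightarrow> (nat list \<Rightarrow> real) \<Rightarrow> nat \<Rightarrow> real" where
  "partition_fn k \<beta> J B h n =
     (\<Sum>\<sigma>\<in>PiE (ball_V k n) (\<lambda>_. {-1, 1::real}).
        exp (\<beta> * J * (\<Sum>e\<in>edges_V k n. \<sigma> (fst e) * \<sigma> (snd e))
             + \<beta> * B * (\<Sum>x\<in>ball_V k n. \<sigma> x)
             + (\<Sum>x\<in>sphere_W k n. h x * \<sigma> x)))"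

definition f_theta :: "real \<Rightarrow> real \<Rightarrow> real" where
  "f_theta \<theta> x = artanh (\<theta> * tanh x)"

end

theory Submission
  imports Defs
begin

lemma f_theta_eq:
  fixes a u :: real
  shows "f_theta (tanh a) u = (ln (cosh (u + a)) - ln (cosh (u - a))) / 2"
proof -
  have ca: "cosh a > 0" and cu: "cosh u > 0" by simp_all
  have "(1 + tanh a * tanh u) / (1 - tanh a * tanh u) = cosh (u + a) / cosh (u - a)"
  proof -
    define D where "D = cosh a * cosh u"
    have D: "D \<noteq> 0" using ca cu by (simp add: D_def)
    have 1: "1 + tanh a * tanh u = (cosh a * cosh u + sinh a * sinh u) / D"
      using ca cu by (simp add: D_def tanh_def field_simps)
    have 2: "1 - tanh a * tanh u = (cosh a * cosh u - sinh a * sinh u) / D"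
      using ca cu by (simp add: D_def tanh_def field_simps)
    show ?thesis unfolding 1 2 using D by (simp add: cosh_add cosh_diff mult.commute)
  qed
  then show ?thesis
    by (simp add: f_theta_def artanh_def ln_div)
qed

lemma two_point:
  fixes a u s :: real
  assumes "s \<in> {-1, 1}"
  shows "(\<Sum>t\<in>{-1,1::real}. exp (a * s * t + u * t))
     = 2 * exp ((ln (cosh (u + a)) + ln (cosh (u - a))) / 2) * exp (f_theta (tanh a) u * s)"
proof -
  have p: "cosh (u+a) > 0" "cosh (u-a) > 0" by simp_all
  have e: "2 * exp ((ln (cosh (u + a)) + ln (cosh (u - a))) / 2) * exp (f_theta (tanh a) u * s)
     = 2 * exp ((ln (cosh (u + a)) + ln (cosh (u - a))) / 2 + f_theta (tanh a) u * s)"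
    by (simp add: exp_add)
  show ?thesis
  proof (cases "s = 1")
    case True
    have "(\<Sum>t\<in>{-1,1::real}. exp (a * s * t + u * t)) = 2 * cosh (u + a)"
      using True by (simp add: cosh_def exp_minus algebra_simps)
    also have "\<dots> = 2 * exp (ln (cosh (u+a)))" using p by simp
    finally show ?thesis using True e by (simp add: f_theta_eq field_simps)
  next
    case False
    then have s: "s = -1" using assms by auto
    have "(\<Sum>t\<in>{-1,1::real}. exp (a * s * t + u * t)) = 2 * cosh (u - a)"
      using s by (simp add: cosh_def exp_minus algebra_simps)
    also have "\<dots> = 2 * exp (ln (cosh (u-a)))" using p by simp
    finally show ?thesis using s e by (simp add: f_theta_eq field_simps)
  qed
qed


lemma cv_snoc: "cayley_vertex k (x @ [i]) \<longleftrightarrow> (if x = [] then i < k + 1 else cayley_vertex k x \<and> i < k)"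
  by (cases x) (auto simp: cayley_vertex_def)

lemma cv_set: "cayley_vertex k xs \<Longrightarrow> set xs \<subseteq> {..<k+1}"
  by (cases xs) (auto simp: cayley_vertex_def)

lemma finite_V: "finite (ball_V k n)"
proof -
  have "ball_V k n \<subseteq> {xs. set xs \<subseteq> {..<k+1} \<and> length xs \<le> n}"
    using cv_set by (auto simp: ball_V_def)
  then show ?thesis by (rule finite_subset) (rule finite_lists_length_le, simp)
qed

lemma W_sub_V: "sphere_W k n \<subseteq> ball_V k n"
  by (auto simp: ball_V_def sphere_W_def)

lemma finite_W: "finite (sphere_W k n)"
  using finite_subset[OF W_sub_V finite_V] .

lemma V_Suc: "ball_V k (Suc n) = ball_V k n \<union> sphere_W k (Suc n)"
  by (auto simp: ball_V_def sphere_W_def)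

lemma V_W_disj: "ball_V k n \<inter> sphere_W k (Suc n) = {}"
  by (auto simp: ball_V_def sphere_W_def)

lemma snoc_decomp: "y \<noteq> [] \<Longrightarrow> y = butlast y @ [last y]"
  by simp

lemma edges_eq: "edges_V k n = (\<lambda>y. (butlast y, y)) ` (ball_V k n - {[]})"
proof
  show "edges_V k n \<subseteq> (\<lambda>y. (butlast y, y)) ` (ball_V k n - {[]})"
    by (auto simp: edges_V_def image_iff)
  show "(\<lambda>y. (butlast y, y)) ` (ball_V k n - {[]}) \<subseteq> edges_V k n"
  proof
    fix e assume "e \<in> (\<lambda>y. (butlast y, y)) ` (ball_V k n - {[]})"
    then obtain y where y: "y \<in> ball_V k n" "y \<noteq> []" "e = (butlast y, y)" by auto
    then have "e = (butlast y, butlast y @ [last y])" by simp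
    moreover have "butlast y @ [last y] \<in> ball_V k n" using y by simp
    ultimately show "e \<in> edges_V k n" unfolding edges_V_def by blast
  qed
qed

lemma edge_sum: "(\<Sum>e\<in>edges_V k n. g (fst e) (snd e)) = (\<Sum>y\<in>ball_V k n - {[]}. g (butlast y) y)"
  unfolding edges_eq by (subst sum.reindex) (auto simp: inj_on_def)

lemma butlast_W: "y \<in> sphere_W k (Suc n) \<Longrightarrow> butlast y \<in> sphere_W k n"
proof -
  assume y: "y \<in> sphere_W k (Suc n)"
  then have ne: "y \<noteq> []" by (auto simp: sphere_W_def)
  have "cayley_vertex k (butlast y @ [last y])" using y ne by (simp add: sphere_W_def)
  then have "cayley_vertex k (butlast y)"
    by (cases "butlast y = []") (simp add: cayley_vertex_def, simp add: cv_snoc)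
  then show ?thesis using y by (simp add: sphere_W_def)
qed

lemma W_Suc_image:
  assumes "n \<ge> 1"
  shows "sphere_W k (Suc n) = (\<lambda>(x, i). x @ [i]) ` (sphere_W k n \<times> {..<k})"
proof
  show "(\<lambda>(x, i). x @ [i]) ` (sphere_W k n \<times> {..<k}) \<subseteq> sphere_W k (Suc n)"
    using assms by (auto simp: sphere_W_def cv_snoc)
  show "sphere_W k (Suc n) \<subseteq> (\<lambda>(x, i). x @ [i]) ` (sphere_W k n \<times> {..<k})"
  proof
    fix y assume y: "y \<in> sphere_W k (Suc n)"
    then have ne: "y \<noteq> []" by (auto simp: sphere_W_def)
    have bl: "butlast y \<in> sphere_W k n" using butlast_W[OF y] .
    then have "length (butlast y) = n" by (simp add: sphere_W_def)
    then have bne: "butlast y \<noteq> []"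
    proof -
      assume l: "length (butlast y) = n"
      show ?thesis
      proof
        assume "butlast y = []"
        with l assms show False by simp
      qed
    qed
    have "cayley_vertex k (butlast y @ [last y])" using y ne by (simp add: sphere_W_def)
    then have "last y < k" using bne by (simp add: cv_snoc)
    then have "(butlast y, last y) \<in> sphere_W k n \<times> {..<k}" using bl by simp
    moreover have "y = (\<lambda>(x, i). x @ [i]) (butlast y, last y)" using ne by simp
    ultimately show "y \<in> (\<lambda>(x, i). x @ [i]) ` (sphere_W k n \<times> {..<k})" by blast
  qed
qed

lemma sum_children:
  assumes "n \<ge> 1"
  shows "(\<Sum>y\<in>sphere_W k (Suc n). g (butlast y)) = real k * (\<Sum>x\<in>sphere_W k n. g x)"
proof -
  have inj: "inj_on (\<lambda>(x, i). x @ [i]) (sphere_W k n \<times> {..<k})"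
    by (auto simp: inj_on_def)
  have "(\<Sum>y\<in>sphere_W k (Suc n). g (butlast y)) = (\<Sum>p\<in>sphere_W k n \<times> {..<k}. g (fst p))"
    unfolding W_Suc_image[OF assms] by (subst sum.reindex[OF inj]) (auto intro!: sum.cong)
  also have "\<dots> = (\<Sum>(x,i)\<in>sphere_W k n \<times> {..<k}. g x)"
    by (rule sum.cong) auto
  also have "\<dots> = (\<Sum>x\<in>sphere_W k n. \<Sum>i<k. g x)"
    by (rule sum.cartesian_product[symmetric])
  also have "\<dots> = real k * (\<Sum>x\<in>sphere_W k n. g x)"
    by (simp add: sum_distrib_left)
  finally show ?thesis .
qed

lemma sum_PiE_Un:
  assumes "finite A" "finite B" "A \<inter> B = {}"
  shows "(\<Sum>\<sigma>\<in>PiE (A \<union> B) S. F \<sigma>)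
     = (\<Sum>\<sigma>1\<in>PiE A S. \<Sum>\<sigma>2\<in>PiE B S. F (\<lambda>x. if x \<in> A then \<sigma>1 x else \<sigma>2 x))"
proof -
  have "(\<Sum>\<sigma>1\<in>PiE A S. \<Sum>\<sigma>2\<in>PiE B S. F (\<lambda>x. if x \<in> A then \<sigma>1 x else \<sigma>2 x))
      = (\<Sum>p\<in>PiE A S \<times> PiE B S. F (\<lambda>x. if x \<in> A then fst p x else snd p x))"
    by (simp add: sum.cartesian_product split_def)
  also have "\<dots> = (\<Sum>\<sigma>\<in>PiE (A \<union> B) S. F \<sigma>)"
  proof (rule sum.reindex_bij_witness[of _ "\<lambda>\<sigma>. (restrict \<sigma> A, restrict \<sigma> B)"
        "\<lambda>p x. if x \<in> A then fst p x else snd p x"])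
    fix \<sigma> assume s: "\<sigma> \<in> PiE (A \<union> B) S"
    show "(\<lambda>x. if x \<in> A then fst (restrict \<sigma> A, restrict \<sigma> B) x else snd (restrict \<sigma> A, restrict \<sigma> B) x) = \<sigma>"
      using s by (auto simp: PiE_def extensional_def)
    show "(restrict \<sigma> A, restrict \<sigma> B) \<in> PiE A S \<times> PiE B S"
      using s by auto
  next
    fix p assume p: "p \<in> PiE A S \<times> PiE B S"
    show "(restrict (\<lambda>x. if x \<in> A then fst p x else snd p x) A,
           restrict (\<lambda>x. if x \<in> A then fst p x else snd p x) B) = p"
      using p assms(3) by (cases p) (auto simp: PiE_def extensional_def restrict_def fun_eq_iff)
    show "(\<lambda>x. if x \<in> A then fst p x else snd p x) \<in> PiE (A \<union> B) S"
      using p by (auto simp: PiE_def extensional_def)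
    show "F (\<lambda>x. if x \<in> A then fst p x else snd p x) = F (\<lambda>x. if x \<in> A then fst p x else snd p x)" ..
  qed
  finally show ?thesis ..
qed


lemma butlast_V: "y \<in> ball_V k n \<Longrightarrow> y \<noteq> [] \<Longrightarrow> butlast y \<in> ball_V k n"
proof -
  assume y: "y \<in> ball_V k n" and ne: "y \<noteq> []"
  have "cayley_vertex k (butlast y @ [last y])" using y ne by (simp add: ball_V_def)
  then have "cayley_vertex k (butlast y)"
    by (cases "butlast y = []") (simp add: cayley_vertex_def, simp add: cv_snoc)
  then show ?thesis using y by (auto simp: ball_V_def)
qed

definition GG :: "nat \<Rightarrow> real \<Rightarrow> real \<Rightarrow> nat \<Rightarrow> (nat list \<Rightarrow> real) \<Rightarrow> real" where
  "GG k a b n \<sigma> = a * (\<Sum>y\<in>ball_V k n - {[]}. \<sigma> (butlast y) * \<sigma> y) + b * (\<Sum>x\<in>ball_V k n. \<sigma> x)"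

lemma Z_GG: "partition_fn k \<beta> J B (\<lambda>_. h) n =
   (\<Sum>\<sigma>\<in>PiE (ball_V k n) (\<lambda>_. {-1, 1::real}). exp (GG k (\<beta> * J) (\<beta> * B) n \<sigma> + (\<Sum>x\<in>sphere_W k n. h * \<sigma> x)))"
proof -
  have "\<And>\<sigma>::nat list \<Rightarrow> real. (\<Sum>e\<in>edges_V k n. \<sigma> (fst e) * \<sigma> (snd e)) = (\<Sum>y\<in>ball_V k n - {[]}. \<sigma> (butlast y) * \<sigma> y)"
    by (rule edge_sum)
  then show ?thesis unfolding partition_fn_def GG_def by (simp add: mult.assoc)
qed

lemma energy_split:
  assumes s1: "\<sigma>1 \<in> PiE (ball_V k n) S" and s2: "\<sigma>2 \<in> PiE (sphere_W k (Suc n)) S"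
  defines "\<sigma> \<equiv> (\<lambda>x. if x \<in> ball_V k n then \<sigma>1 x else \<sigma>2 x)"
  shows "GG k a b (Suc n) \<sigma> + (\<Sum>x\<in>sphere_W k (Suc n). h * \<sigma> x)
       = GG k a b n \<sigma>1 + (\<Sum>y\<in>sphere_W k (Suc n). a * \<sigma>1 (butlast y) * \<sigma>2 y + (h + b) * \<sigma>2 y)"
proof -
  let ?V = "ball_V k n" and ?W = "sphere_W k (Suc n)"
  have fin: "finite (?V - {[]})" "finite ?W" "finite ?V" using finite_V finite_W by auto
  have d1: "(?V - {[]}) \<inter> ?W = {}" and d2: "?V \<inter> ?W = {}" using V_W_disj by auto
  have U1: "ball_V k (Suc n) - {[]} = (?V - {[]}) \<union> ?W"
    using V_Suc[of k n] by (auto simp: sphere_W_def)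
  have Wne: "\<And>y. y \<in> ?W \<Longrightarrow> y \<notin> ?V" using d2 by blast
  have e1: "(\<Sum>y\<in>ball_V k (Suc n) - {[]}. \<sigma> (butlast y) * \<sigma> y)
      = (\<Sum>y\<in>?V - {[]}. \<sigma>1 (butlast y) * \<sigma>1 y) + (\<Sum>y\<in>?W. \<sigma>1 (butlast y) * \<sigma>2 y)"
  proof -
    have "(\<Sum>y\<in>ball_V k (Suc n) - {[]}. \<sigma> (butlast y) * \<sigma> y)
       = (\<Sum>y\<in>?V - {[]}. \<sigma> (butlast y) * \<sigma> y) + (\<Sum>y\<in>?W. \<sigma> (butlast y) * \<sigma> y)"
      unfolding U1 by (rule sum.union_disjoint[OF fin(1,2) d1])
    also have "(\<Sum>y\<in>?V - {[]}. \<sigma> (butlast y) * \<sigma> y) = (\<Sum>y\<in>?V - {[]}. \<sigma>1 (butlast y) * \<sigma>1 y)"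
      by (rule sum.cong) (auto simp: \<sigma>_def butlast_V)
    also have "(\<Sum>y\<in>?W. \<sigma> (butlast y) * \<sigma> y) = (\<Sum>y\<in>?W. \<sigma>1 (butlast y) * \<sigma>2 y)"
    proof -
      have bW: "\<And>y. y \<in> ?W \<Longrightarrow> butlast y \<in> ?V" using butlast_W W_sub_V by blast
      show ?thesis using bW Wne by (intro sum.cong) (auto simp: \<sigma>_def)
    qed
    finally show ?thesis .
  qed
  have e2: "(\<Sum>x\<in>ball_V k (Suc n). \<sigma> x) = (\<Sum>x\<in>?V. \<sigma>1 x) + (\<Sum>x\<in>?W. \<sigma>2 x)"
  proof -
    have "(\<Sum>x\<in>ball_V k (Suc n). \<sigma> x) = (\<Sum>x\<in>?V. \<sigma> x) + (\<Sum>x\<in>?W. \<sigma> x)"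
      unfolding V_Suc by (rule sum.union_disjoint[OF fin(3,2) d2])
    also have "(\<Sum>x\<in>?V. \<sigma> x) = (\<Sum>x\<in>?V. \<sigma>1 x)" by (rule sum.cong) (auto simp: \<sigma>_def)
    also have "(\<Sum>x\<in>?W. \<sigma> x) = (\<Sum>x\<in>?W. \<sigma>2 x)" using Wne by (intro sum.cong) (auto simp: \<sigma>_def)
    finally show ?thesis .
  qed
  have e3: "(\<Sum>x\<in>?W. h * \<sigma> x) = (\<Sum>x\<in>?W. h * \<sigma>2 x)"
    using Wne by (intro sum.cong) (auto simp: \<sigma>_def)
  show ?thesis
    unfolding GG_def e1 e2 e3
    by (simp add: sum.distrib sum_distrib_left algebra_simps)
qed


lemma Z_rec:
  assumes n1: "n \<ge> 1" and hf: "h = real k * f_theta (tanh (\<beta> * J)) (h + \<beta> * B)"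
  shows "partition_fn k \<beta> J B (\<lambda>_. h) (Suc n)
     = (2 * exp ((ln (cosh (h + \<beta> * B + \<beta> * J)) + ln (cosh (h + \<beta> * B - \<beta> * J))) / 2))
         ^ card (sphere_W k (Suc n)) * partition_fn k \<beta> J B (\<lambda>_. h) n"
proof -
  define S where "S = (\<lambda>_::nat list. {-1, 1::real})"
  define a where "a = \<beta> * J"
  define b where "b = \<beta> * B"
  define u where "u = h + b"
  define Cc where "Cc = 2 * exp ((ln (cosh (u + a)) + ln (cosh (u - a))) / 2)"
  define f where "f = f_theta (tanh a) u"
  let ?V = "ball_V k n" and ?W = "sphere_W k (Suc n)"
  have hf': "h = real k * f" using hf by (simp add: f_def a_def u_def b_def)
  have finW: "finite ?W" by (rule finite_W)
  have bW: "\<And>y. y \<in> ?W \<Longrightarrow> butlast y \<in> ?V" using butlast_W W_sub_V by blast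
  have inner: "(\<Sum>\<sigma>2\<in>PiE ?W S. exp (GG k a b n \<sigma>1 + (\<Sum>y\<in>?W. a * \<sigma>1 (butlast y) * \<sigma>2 y + (h + b) * \<sigma>2 y)))
     = exp (GG k a b n \<sigma>1) * (Cc ^ card ?W * exp (\<Sum>x\<in>sphere_W k n. h * \<sigma>1 x))"
    if s1: "\<sigma>1 \<in> PiE ?V S" for \<sigma>1
  proof -
    have "(\<Sum>\<sigma>2\<in>PiE ?W S. exp (GG k a b n \<sigma>1 + (\<Sum>y\<in>?W. a * \<sigma>1 (butlast y) * \<sigma>2 y + (h + b) * \<sigma>2 y)))
       = exp (GG k a b n \<sigma>1) * (\<Sum>\<sigma>2\<in>PiE ?W S. \<Prod>y\<in>?W. exp (a * \<sigma>1 (butlast y) * \<sigma>2 y + u * \<sigma>2 y))"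
      by (simp add: exp_add exp_sum[OF finW] sum_distrib_left u_def)
    also have "(\<Sum>\<sigma>2\<in>PiE ?W S. \<Prod>y\<in>?W. exp (a * \<sigma>1 (butlast y) * \<sigma>2 y + u * \<sigma>2 y))
       = (\<Prod>y\<in>?W. \<Sum>t\<in>S y. exp (a * \<sigma>1 (butlast y) * t + u * t))"
      by (rule prod_sum_PiE[symmetric]) (auto simp: finW S_def)
    also have "\<dots> = (\<Prod>y\<in>?W. Cc * exp (f * \<sigma>1 (butlast y)))"
    proof (rule prod.cong)
      fix y assume y: "y \<in> ?W"
      have "\<sigma>1 (butlast y) \<in> {-1, 1}" using s1 bW[OF y] by (auto simp: S_def PiE_def Pi_def)
      then show "(\<Sum>t\<in>S y. exp (a * \<sigma>1 (butlast y) * t + u * t)) = Cc * exp (f * \<sigma>1 (butlast y))"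
        unfolding S_def Cc_def f_def by (rule two_point)
    qed simp
    also have "\<dots> = Cc ^ card ?W * exp (\<Sum>y\<in>?W. f * \<sigma>1 (butlast y))"
      by (simp add: prod.distrib exp_sum[OF finW])
    also have "(\<Sum>y\<in>?W. f * \<sigma>1 (butlast y)) = f * (real k * (\<Sum>x\<in>sphere_W k n. \<sigma>1 x))"
      by (simp add: sum_distrib_left[symmetric] sum_children[OF n1])
    also have "\<dots> = (\<Sum>x\<in>sphere_W k n. h * \<sigma>1 x)"
      by (simp add: hf' sum_distrib_left mult_ac)
    finally show ?thesis .
  qed
  have "partition_fn k \<beta> J B (\<lambda>_. h) (Suc n)
      = (\<Sum>\<sigma>\<in>PiE (?V \<union> ?W) S. exp (GG k a b (Suc n) \<sigma> + (\<Sum>x\<in>?W. h * \<sigma> x)))"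
    unfolding Z_GG V_Suc S_def a_def b_def ..
  also have "\<dots> = (\<Sum>\<sigma>1\<in>PiE ?V S. \<Sum>\<sigma>2\<in>PiE ?W S.
       exp (GG k a b (Suc n) (\<lambda>x. if x \<in> ?V then \<sigma>1 x else \<sigma>2 x)
          + (\<Sum>x\<in>?W. h * (\<lambda>x. if x \<in> ?V then \<sigma>1 x else \<sigma>2 x) x)))"
    by (rule sum_PiE_Un[OF finite_V finite_W V_W_disj])
  also have "\<dots> = (\<Sum>\<sigma>1\<in>PiE ?V S. \<Sum>\<sigma>2\<in>PiE ?W S.
       exp (GG k a b n \<sigma>1 + (\<Sum>y\<in>?W. a * \<sigma>1 (butlast y) * \<sigma>2 y + (h + b) * \<sigma>2 y)))"
    by (intro sum.cong refl arg_cong[where f=exp] energy_split)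
  also have "\<dots> = (\<Sum>\<sigma>1\<in>PiE ?V S. exp (GG k a b n \<sigma>1) * (Cc ^ card ?W * exp (\<Sum>x\<in>sphere_W k n. h * \<sigma>1 x)))"
    by (rule sum.cong[OF refl]) (rule inner)
  also have "\<dots> = Cc ^ card ?W * partition_fn k \<beta> J B (\<lambda>_. h) n"
    unfolding Z_GG S_def a_def b_def by (simp add: sum_distrib_left exp_add mult_ac)
  finally show ?thesis by (simp add: Cc_def u_def a_def b_def)
qed


lemma Z_pos: "partition_fn k \<beta> J B h' n > 0"
  unfolding partition_fn_def
  by (rule sum_pos) (auto simp: finite_PiE finite_V PiE_eq_empty_iff)

lemma cv_rep: "k \<ge> 1 \<Longrightarrow> cayley_vertex k (replicate m 0)"
  by (cases m) (auto simp: cayley_vertex_def)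

lemma card_V_ge: "real (card (ball_V k n)) \<ge> real n" if "k \<ge> 1"
proof -
  have sub: "(\<lambda>m. replicate m 0) ` {..<n} \<subseteq> ball_V k n"
    using that cv_rep by (auto simp: ball_V_def)
  have "card ((\<lambda>m. replicate m (0::nat)) ` {..<n}) = n"
    by (subst card_image) (auto simp: inj_on_def)
  then have "n \<le> card (ball_V k n)" using card_mono[OF finite_V sub] by simp
  then show ?thesis by simp
qed

theorem proposition2:
  fixes k :: nat and \<beta> J B h :: real
  assumes "k \<ge> 2" and "\<beta> > 0"
    and "h = real k * f_theta (tanh (\<beta> * J)) (h + \<beta> * B)"
  shows "(\<lambda>n. - (1 / (\<beta> * real (card (ball_V k n)))) * ln (partition_fn k \<beta> J B (\<lambda>_. h) n))
           \<longlonglongrightarrow> - (1 / (2 * \<beta>)) * ln (4 * cosh (h + \<beta> * (B + J)) * cosh (h + \<beta> * (B - J)))"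
proof -
  define Cc where "Cc = 2 * exp ((ln (cosh (h + \<beta> * B + \<beta> * J)) + ln (cosh (h + \<beta> * B - \<beta> * J))) / 2)"
  define L where "L = ln Cc"
  define Z where "Z = partition_fn k \<beta> J B (\<lambda>_. h)"
  define N where "N = (\<lambda>n. real (card (ball_V k n)))"
  have Cpos: "Cc > 0" by (simp add: Cc_def)
  have L: "L = (1/2) * ln (4 * cosh (h + \<beta> * (B + J)) * cosh (h + \<beta> * (B - J)))"
  proof -
    have "L = ln 2 + (ln (cosh (h + \<beta> * B + \<beta> * J)) + ln (cosh (h + \<beta> * B - \<beta> * J))) / 2"
      by (simp add: L_def Cc_def ln_mult)
    also have "\<dots> = (1/2) * (ln 4 + ln (cosh (h + \<beta> * (B + J))) + ln (cosh (h + \<beta> * (B - J))))"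
    proof -
      have "ln (4::real) = 2 * ln 2"
        using ln_realpow[of 2 2] by simp
      then show ?thesis by (simp add: algebra_simps)
    qed
    also have "\<dots> = (1/2) * ln (4 * cosh (h + \<beta> * (B + J)) * cosh (h + \<beta> * (B - J)))"
      by (simp add: ln_mult)
    finally show ?thesis .
  qed
  have rec: "ln (Z n) = ln (Z 1) + (N n - N 1) * L" if "n \<ge> 1" for n
    using that
  proof (induction n rule: dec_induct)
    case base then show ?case by simp
  next
    case (step n)
    have "Z (Suc n) = Cc ^ card (sphere_W k (Suc n)) * Z n"
      unfolding Z_def Cc_def by (rule Z_rec[OF step(1) assms(3)])
    then have "ln (Z (Suc n)) = real (card (sphere_W k (Suc n))) * L + ln (Z n)"
      using Cpos Z_pos[of k \<beta> J B "\<lambda>_. h" n] by (simp add: Z_def ln_mult ln_realpow L_def)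
    moreover have "N (Suc n) = N n + real (card (sphere_W k (Suc n)))"
      unfolding N_def V_Suc by (simp add: card_Un_disjoint finite_V finite_W V_W_disj)
    ultimately show ?case using step(3) by (simp add: algebra_simps)
  qed
  define c where "c = ln (Z 1) - N 1 * L"
  have Npos: "N n > 0" if "n \<ge> 1" for n
    using card_V_ge[of k n] assms(1) that by (simp add: N_def)
  have ev: "\<forall>\<^sub>F n in sequentially. - (1 / (1 * \<beta>)) * (L + c / N n)
      = - (1 / (\<beta> * real (card (ball_V k n)))) * ln (partition_fn k \<beta> J B (\<lambda>_. h) n)"
  proof (rule eventually_sequentiallyI[of 1])
    fix n :: nat assume n: "n \<ge> 1"
    have "N n > 0" using Npos[OF n] .
    moreover have cn: "real (card (ball_V k n)) = N n" unfolding N_def ..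
    ultimately show "- (1 / (1 * \<beta>)) * (L + c / N n)
      = - (1 / (\<beta> * real (card (ball_V k n)))) * ln (partition_fn k \<beta> J B (\<lambda>_. h) n)"
      using rec[OF n] assms(2) unfolding Z_def[symmetric] cn c_def
      by (simp add: field_simps)
  qed
  have Ninf: "filterlim N at_top sequentially"
    by (rule filterlim_at_top_mono[OF filterlim_real_sequentially])
       (rule always_eventually, use card_V_ge[of k] assms(1) in \<open>auto simp: N_def\<close>)
  have "(\<lambda>n. c / N n) \<longlonglongrightarrow> 0"
    by (rule tendsto_divide_0[OF tendsto_const filterlim_at_top_imp_at_infinity[OF Ninf]])
  then have "(\<lambda>n. - (1 / (1 * \<beta>)) * (L + c / N n)) \<longlonglongrightarrow> - (1 / (1 * \<beta>)) * (L + 0)"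
    by (intro tendsto_intros)
  then have "(\<lambda>n. - (1 / (\<beta> * real (card (ball_V k n)))) * ln (partition_fn k \<beta> J B (\<lambda>_. h) n))
      \<longlonglongrightarrow> - (1 / (1 * \<beta>)) * (L + 0)"
    using ev by (rule Lim_transform_eventually)
  moreover have "- (1 / (1 * \<beta>)) * (L + 0) = - (1 / (2 * \<beta>)) * ln (4 * cosh (h + \<beta> * (B + J)) * cosh (h + \<beta> * (B - J)))"
    unfolding L by simp
  ultimately show ?thesis by simp
qed

end
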